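(* Let $D$ be a digraph with $n$ vertices that contains a directed cycle, and let $g$ be its girth. Then $\chi(D)\leq \left\lfloor\frac{n-1}{g-1}\right\rfloor+1$.
   Context: All digraphs are finite, loopless and strict (at most one edge from $u$ to $v$ for distinct $u,v$). The girth is the length of a shortest directed cycle. A subset $S\subseteq V(D)$ is acyclic if $D[S]$ contains no directed cycle; a proper $k$-coloring of $D$ is a partition of $V(D)$ into at most $k$ acyclic subsets, and $\chi(D)$ is the minimum $k$ for which $D$ has a proper $k$-coloring. *)

theory Defs
  imports Main
begin

definition digraph :: "'a set \<Rightarrow> ('a \<times> 'a) set \<Rightarrow> bool" where
  "digraph V E \<longleftrightarrow> finite V \<and> E \<subseteq> V \<times> V \<and> (\<forall>v. (v, v) \<notin> E)"

definition is_dcycle_in :: "('a \<times> 'a) set \<Rightarrow> 'a set \<Rightarrow> 'a list \<Rightarrow> bool" where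
  "is_dcycle_in E S cs \<longleftrightarrow> length cs \<ge> 2 \<and> distinct cs \<and> set cs \<subseteq> S \<and>
     (\<forall>i < length cs. (cs ! i, cs ! ((i + 1) mod length cs)) \<in> E)"

definition has_dcycle :: "'a set \<Rightarrow> ('a \<times> 'a) set \<Rightarrow> bool" where
  "has_dcycle V E \<longleftrightarrow> (\<exists>cs. is_dcycle_in E V cs)"

definition girth :: "'a set \<Rightarrow> ('a \<times> 'a) set \<Rightarrow> nat" where
  "girth V E = (LEAST k. \<exists>cs. is_dcycle_in E V cs \<and> length cs = k)"

definition acyclic_set :: "('a \<times> 'a) set \<Rightarrow> 'a set \<Rightarrow> bool" where
  "acyclic_set E S \<longleftrightarrow> \<not> (\<exists>cs. is_dcycle_in E S cs)"

definition proper_coloring :: "'a set \<Rightarrow> ('a \<times> 'a) set \<Rightarrow> nat \<Rightarrow> ('a \<Rightarrow> nat) \<Rightarrow> bool" where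
  "proper_coloring V E k c \<longleftrightarrow> (\<forall>v\<in>V. c v < k) \<and>
     (\<forall>i < k. acyclic_set E {v \<in> V. c v = i})"

definition dichromatic_number :: "'a set \<Rightarrow> ('a \<times> 'a) set \<Rightarrow> nat" where
  "dichromatic_number V E = (LEAST k. \<exists>c. proper_coloring V E k c)"

end

theory Submission
  imports Defs
begin

theorem mainTheorem7:
  fixes V :: "'a set" and E :: "('a \<times> 'a) set"
  assumes "digraph V E" and "has_dcycle V E"
  shows "dichromatic_number V E \<le> (card V - 1) div (girth V E - 1) + 1"
proof -
  have finV: "finite V" using assms(1) by (simp add: digraph_def)
  obtain cs0 where cs0: "is_dcycle_in E V cs0" using assms(2) by (auto simp: has_dcycle_def)
  define g where "g = girth V E"
  have gle: "g \<le> length cs" if "is_dcycle_in E V cs" for cs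
    unfolding g_def girth_def by (rule Least_le) (use that in blast)
  have gex: "\<exists>cs. is_dcycle_in E V cs \<and> length cs = g"
    unfolding g_def girth_def by (rule LeastI_ex) (use cs0 in blast)
  then obtain cs1 where cs1: "is_dcycle_in E V cs1" "length cs1 = g" by blast
  have g2: "g \<ge> 2" using cs1 by (simp add: is_dcycle_in_def)
  define m where "m = g - 1"
  have m1: "m \<ge> 1" using g2 by (simp add: m_def)
  obtain f where f: "bij_betw f V {0..<card V}" using ex_bij_betw_finite_nat[OF finV] by blast
  define k where "k = (card V - 1) div m + 1"
  define c where "c v = f v div m" for v
  have col: "proper_coloring V E k c"
    unfolding proper_coloring_def
  proof (intro conjI ballI allI impI)
    fix v assume "v \<in> V"
    then have "f v < card V" using f by (auto simp: bij_betw_def)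
    then have "f v \<le> card V - 1" by simp
    then have "f v div m \<le> (card V - 1) div m" by (rule div_le_mono)
    then show "c v < k" by (simp add: c_def k_def)
  next
    fix i assume "i < k"
    let ?S = "{v \<in> V. c v = i}"
    have inj: "inj_on f ?S" using f by (auto simp: bij_betw_def intro: inj_on_subset)
    have img: "f ` ?S \<subseteq> {i*m..<i*m+m}"
    proof
      fix x assume "x \<in> f ` ?S"
      then obtain v where v: "x = f v" "f v div m = i" by (auto simp: c_def)
      have "f v div m * m \<le> f v" by (rule div_times_less_eq_dividend)
      moreover have "f v < (f v div m) * m + m"
        proof -
        have "f v mod m < m" using m1 by simp
        moreover have "f v = f v div m * m + f v mod m" by simp
        ultimately show ?thesis by linarith
      qed
      ultimately show "x \<in> {i*m..<i*m+m}" using v by auto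
    qed
    have cardS: "card ?S \<le> m"
      using card_inj_on_le[OF inj img] by simp
    show "acyclic_set E ?S"
      unfolding acyclic_set_def
    proof
      assume "\<exists>cs. is_dcycle_in E ?S cs"
      then obtain cs where cs: "is_dcycle_in E ?S cs" by blast
      then have "is_dcycle_in E V cs" by (auto simp: is_dcycle_in_def)
      then have "g \<le> length cs" by (rule gle)
      moreover have "length cs = card (set cs)" using cs by (simp add: is_dcycle_in_def distinct_card)
      moreover have "card (set cs) \<le> card ?S"
        using cs finV by (intro card_mono) (auto simp: is_dcycle_in_def)
      ultimately show False using cardS m1 by (simp add: m_def)
    qed
  qed
  have "dichromatic_number V E \<le> k"
    unfolding dichromatic_number_def by (rule Least_le) (use col in blast)
  then show ?thesis by (simp add: k_def m_def g_def)
qed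

end
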